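(* Let $Y$ be an isotropic $\alpha$-stable process in $\mathbb{R}^d$, $\alpha\in(0,2]$, let $\Omega\subset\mathbb{R}^d$ be a bounded open set, and let $\{(\lambda^Y_n,\psi^Y_n)\}_{n\ge1}$ be the eigenpairs of the killed process $Y^\Omega$. Let $D$ be a subordinator with infinite Lévy measure and Laplace exponent $\phi$, independent of $Y$. Then \[ \ln Q^{Y\circ D}_\Omega(t)\sim -t\,\phi(\lambda^Y_1)\quad\text{as }t\to\infty. \]
   Context: $Y$ is a Lévy process with càdlàg paths and $\mathbb{E}[e^{i\langle\xi,Y_t\rangle}]=e^{-t|\xi|^\alpha}$; $\mathbb{P}_x$ is its law started at $x$. $\tau_\Omega^Y=\inf\{t>0:Y_t\notin\Omega\}$; the killed process $Y^\Omega$ has transition density $p^{Y,\Omega}(t,x,y)=\sum_{n\ge1}e^{-\lambda_n^Yt}\psi_n^Y(x)\psi_n^Y(y)$ with $0<\lambda^Y_1<\lambda^Y_2\le\cdots\to\infty$ the eigenvalues and $\{\psi_n^Y\}$ the $L^2(\Omega)$-orthonormal eigenfunctions. $Q_\Omega^Y(t)=\int_\Omega\mathbb{P}_x(\tau^Y_\Omega>t)dx$. A subordinator $D$ is a nondecreasing càdlàg Lévy process with $D_0=0$, $\mathbb{E}[e^{-\lambda D_t}]=e^{-t\phi(\lambda)}$, $\phi(\lambda)=\int_0^\infty(1-e^{-\lambda x})\nu(dx)$, with Lévy measure $\nu$ satisfying $\int_0^\infty(1\wedge x)\nu(dx)<\infty$ and $\nu(0,\infty)=\infty$. The spectral heat content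 of $Y\circ D$ is $Q^{Y\circ D}_\Omega(t)=\mathbb{E}[Q^Y_\Omega(D_t)]$. $f\sim g$ means $f(t)/g(t)\to1$. *)

theory Defs
  imports "HOL-Probability.Probability" "HOL-Library.Landau_Symbols"
begin

definition cadlag_path :: "(real \<Rightarrow> 'b::topological_space) \<Rightarrow> bool" where
  "cadlag_path f \<longleftrightarrow>
     (\<forall>t\<ge>0. continuous (at_right t) f) \<and> (\<forall>t>0. \<exists>l. (f \<longlongrightarrow> l) (at_left t))"

definition levy_process :: "'a measure \<Rightarrow> (real \<Rightarrow> 'a \<Rightarrow> 'b::euclidean_space) \<Rightarrow> bool" where
  "levy_process M X \<longleftrightarrow>
     prob_space M \<and>
     (\<forall>t. X t \<in> borel_measurable M) \<and>
     (\<forall>\<omega>\<in>space M. X 0 \<omega> = 0) \<and>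
     (\<forall>\<omega>\<in>space M. cadlag_path (\<lambda>s. X s \<omega>)) \<and>
     (\<forall>(n::nat) (t::nat \<Rightarrow> real). 0 \<le> t 0 \<and> (\<forall>i<n. t i < t (Suc i)) \<longrightarrow>
        prob_space.indep_vars M (\<lambda>_. borel) (\<lambda>i \<omega>. X (t (Suc i)) \<omega> - X (t i) \<omega>) {..<n}) \<and>
     (\<forall>s t. 0 \<le> s \<and> s \<le> t \<longrightarrow>
        distr M borel (\<lambda>\<omega>. X t \<omega> - X s \<omega>) = distr M borel (X (t - s)))"

definition isotropic_stable :: "'a measure \<Rightarrow> real \<Rightarrow> (real \<Rightarrow> 'a \<Rightarrow> 'b::euclidean_space) \<Rightarrow> bool" where
  "isotropic_stable M \<alpha> Y \<longleftrightarrow> levy_process M Y \<and>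
     (\<forall>t\<ge>0. \<forall>\<xi>. (\<integral>\<omega>. cis (\<xi> \<bullet> Y t \<omega>) \<partial>M) = complex_of_real (exp (- (t * norm \<xi> powr \<alpha>))))"

definition infinite_levy_measure :: "real measure \<Rightarrow> bool" where
  "infinite_levy_measure \<nu> \<longleftrightarrow> sets \<nu> = sets borel \<and> emeasure \<nu> {..0} = 0 \<and>
     (\<integral>\<^sup>+ x. ennreal (min 1 x) \<partial>\<nu>) < \<infinity> \<and> emeasure \<nu> {0<..} = \<infinity>"

definition laplace_exponent :: "real measure \<Rightarrow> real \<Rightarrow> real" where
  "laplace_exponent \<nu> l = (\<integral>x. (1 - exp (- l * x)) \<partial>\<nu>)"

definition subordinator :: "'a measure \<Rightarrow> (real \<Rightarrow> 'a \<Rightarrow> real) \<Rightarrow> real measure \<Rightarrow> bool" where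
  "subordinator M D \<nu> \<longleftrightarrow> levy_process M D \<and> infinite_levy_measure \<nu> \<and>
     (\<forall>\<omega>\<in>space M. mono_on {0..} (\<lambda>t. D t \<omega>)) \<and>
     (\<forall>l\<ge>0. \<forall>t\<ge>0. (\<integral>\<omega>. exp (- l * D t \<omega>) \<partial>M) = exp (- t * laplace_exponent \<nu> l))"

text \<open>First exit time from \<Omega> of a path f (in the extended reals; Inf of the empty set is infinity).\<close>
definition exit_time :: "'b set \<Rightarrow> (real \<Rightarrow> 'b) \<Rightarrow> ereal" where
  "exit_time \<Omega> f = Inf (ereal ` {t. t > 0 \<and> f t \<notin> \<Omega>})"

text \<open>P_x(tau_\<Omega> > t), where under P_x the process is x + Y.\<close>
definition survival_prob :: "'a measure \<Rightarrow> (real \<Rightarrow> 'a \<Rightarrow> 'b::euclidean_space) \<Rightarrow> 'b set \<Rightarrow> 'b \<Rightarrow> real \<Rightarrow> real" where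
  "survival_prob M Y \<Omega> x t = measure M {\<omega>\<in>space M. ereal t < exit_time \<Omega> (\<lambda>s. x + Y s \<omega>)}"

definition spectral_heat_content :: "'a measure \<Rightarrow> (real \<Rightarrow> 'a \<Rightarrow> 'b::euclidean_space) \<Rightarrow> 'b set \<Rightarrow> real \<Rightarrow> real" where
  "spectral_heat_content M Y \<Omega> t = (\<integral>x\<in>\<Omega>. survival_prob M Y \<Omega> x t \<partial>lborel)"

text \<open>Spectral heat content of the subordinate process: Q^{Y o D}(t) = E[Q^Y(D_t)].\<close>
definition subordinate_heat_content :: "'a measure \<Rightarrow> (real \<Rightarrow> 'a \<Rightarrow> 'b::euclidean_space) \<Rightarrow> (real \<Rightarrow> 'a \<Rightarrow> real) \<Rightarrow> 'b set \<Rightarrow> real \<Rightarrow> real" where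
  "subordinate_heat_content M Y D \<Omega> t = (\<integral>\<omega>. spectral_heat_content M Y \<Omega> (D t \<omega>) \<partial>M)"

definition killed_eigenpairs :: "'a measure \<Rightarrow> (real \<Rightarrow> 'a \<Rightarrow> 'b::euclidean_space) \<Rightarrow> 'b set \<Rightarrow>
    (nat \<Rightarrow> real) \<Rightarrow> (nat \<Rightarrow> 'b \<Rightarrow> real) \<Rightarrow> bool" where
  "killed_eigenpairs M Y \<Omega> lam \<psi> \<longleftrightarrow>
     (\<forall>n\<ge>1. \<psi> n \<in> borel_measurable borel \<and> set_integrable lborel \<Omega> (\<lambda>x. (\<psi> n x)\<^sup>2)) \<and>
     (\<forall>n\<ge>1. \<forall>m\<ge>1. (\<integral>x\<in>\<Omega>. \<psi> n x * \<psi> m x \<partial>lborel) = (if n = m then 1 else 0)) \<and>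
     0 < lam 1 \<and> lam 1 < lam 2 \<and> (\<forall>n\<ge>2. lam n \<le> lam (Suc n)) \<and> filterlim lam at_top sequentially \<and>
     (\<forall>t>0. \<forall>x\<in>\<Omega>. \<forall>y\<in>\<Omega>.
        summable (\<lambda>n. exp (- lam (Suc n) * t) * \<psi> (Suc n) x * \<psi> (Suc n) y)) \<and>
     (\<forall>t>0. \<forall>x\<in>\<Omega>. \<forall>A\<in>sets borel. A \<subseteq> \<Omega> \<longrightarrow>
        measure M {\<omega>\<in>space M. ereal t < exit_time \<Omega> (\<lambda>s. x + Y s \<omega>) \<and> x + Y t \<omega> \<in> A}
        = (\<integral>y\<in>A. (\<Sum>n. exp (- lam (Suc n) * t) * \<psi> (Suc n) x * \<psi> (Suc n) y) \<partial>lborel))"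

definition process_sigma :: "'a measure \<Rightarrow> (real \<Rightarrow> 'a \<Rightarrow> 'b::topological_space) \<Rightarrow> 'a set set" where
  "process_sigma M X = sigma_sets (space M) (\<Union>t. {X t -` A \<inter> space M | A. A \<in> sets borel})"

end

theory Submission
  imports Defs
begin
lemma abs_mult_le_sq: "\<bar>(a::real) * b\<bar> \<le> a\<^sup>2 + b\<^sup>2"
proof -
  have "0 \<le> (\<bar>a\<bar> - \<bar>b\<bar>)\<^sup>2" by simp
  then have "2*\<bar>a\<bar>*\<bar>b\<bar> \<le> \<bar>a\<bar>\<^sup>2 + \<bar>b\<bar>\<^sup>2" unfolding power2_diff by linarith
  moreover have "0 \<le> \<bar>a\<bar>*\<bar>b\<bar>" by simp
  ultimately show ?thesis unfolding abs_mult power2_abs by linarith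
qed

lemma sq_int_prod:
  fixes f g :: "'b \<Rightarrow> real"
  assumes [measurable]: "f \<in> borel_measurable N" "g \<in> borel_measurable N"
    and "integrable N (\<lambda>x. (f x)\<^sup>2)" "integrable N (\<lambda>x. (g x)\<^sup>2)"
  shows "integrable N (\<lambda>x. f x * g x)"
  by (rule Bochner_Integration.integrable_bound[OF Bochner_Integration.integrable_add[OF assms(3,4)]])
     (auto intro!: abs_mult_le_sq)

lemma sq_int_add:
  fixes f g :: "'b \<Rightarrow> real"
  assumes [measurable]: "f \<in> borel_measurable N" "g \<in> borel_measurable N"
    and "integrable N (\<lambda>x. (f x)\<^sup>2)" "integrable N (\<lambda>x. (g x)\<^sup>2)"
  shows "integrable N (\<lambda>x. (f x + g x)\<^sup>2)"
proof -
  have "integrable N (\<lambda>x. (f x)\<^sup>2 + 2 * (f x * g x) + (g x)\<^sup>2)"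
    using assms sq_int_prod[OF assms] by auto
  moreover have "(\<lambda>x. (f x + g x)\<^sup>2) = (\<lambda>x. (f x)\<^sup>2 + 2 * (f x * g x) + (g x)\<^sup>2)"
    by (auto simp: power2_sum fun_eq_iff)
  ultimately show ?thesis by simp
qed

lemma sq_int_sum:
  fixes f :: "nat \<Rightarrow> 'b \<Rightarrow> real"
  assumes "finite I" and [measurable]: "\<And>i. f i \<in> borel_measurable N"
    and "\<And>i. i \<in> I \<Longrightarrow> integrable N (\<lambda>x. (f i x)\<^sup>2)"
  shows "integrable N (\<lambda>x. (\<Sum>i\<in>I. f i x)\<^sup>2)"
  using assms(1,3)
proof (induction I rule: finite_induct)
  case empty
  then show ?case by simp
next
  case (insert i I)
  then show ?case by (simp add: sq_int_add)
qed

lemma CS_real: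
  fixes f g :: "'b \<Rightarrow> real"
  assumes [measurable]: "f \<in> borel_measurable N" "g \<in> borel_measurable N"
    and f2: "integrable N (\<lambda>x. (f x)\<^sup>2)" and g2: "integrable N (\<lambda>x. (g x)\<^sup>2)"
  shows "\<bar>\<integral>x. f x * g x \<partial>N\<bar> \<le> sqrt ((\<integral>x. (f x)\<^sup>2 \<partial>N) * (\<integral>x. (g x)\<^sup>2 \<partial>N))"
proof -
  have fg: "integrable N (\<lambda>x. f x * g x)" by (rule sq_int_prod) (use assms in auto)
  then have absfg: "integrable N (\<lambda>x. \<bar>f x * g x\<bar>)" by auto
  then have absfg': "integrable N (\<lambda>x. \<bar>f x\<bar> * \<bar>g x\<bar>)" by (simp add: abs_mult)
  have CS: "(\<integral>\<^sup>+x. ennreal \<bar>f x\<bar> * ennreal \<bar>g x\<bar> \<partial>N)\<^sup>2 \<le>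
      (\<integral>\<^sup>+x. ennreal \<bar>f x\<bar> ^ 2 \<partial>N) * (\<integral>\<^sup>+x. ennreal \<bar>g x\<bar> ^ 2 \<partial>N)"
    by (rule Cauchy_Schwarz_nn_integral) auto
  have e1: "(\<integral>\<^sup>+x. ennreal \<bar>f x\<bar> * ennreal \<bar>g x\<bar> \<partial>N) = ennreal (\<integral>x. \<bar>f x * g x\<bar> \<partial>N)"
    by (subst nn_integral_eq_integral[symmetric]) (auto simp: abs_mult ennreal_mult absfg')
  have e2: "(\<integral>\<^sup>+x. ennreal \<bar>f x\<bar> ^ 2 \<partial>N) = ennreal (\<integral>x. (f x)\<^sup>2 \<partial>N)"
    by (subst nn_integral_eq_integral[symmetric]) (auto simp: ennreal_power f2)
  have e3: "(\<integral>\<^sup>+x. ennreal \<bar>g x\<bar> ^ 2 \<partial>N) = ennreal (\<integral>x. (g x)\<^sup>2 \<partial>N)"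
    by (subst nn_integral_eq_integral[symmetric]) (auto simp: ennreal_power g2)
  have nnA: "0 \<le> (\<integral>x. \<bar>f x * g x\<bar> \<partial>N)" by simp
  have nnB: "0 \<le> (\<integral>x. (f x)\<^sup>2 \<partial>N)" "0 \<le> (\<integral>x. (g x)\<^sup>2 \<partial>N)" by simp_all
  have "ennreal ((\<integral>x. \<bar>f x * g x\<bar> \<partial>N)\<^sup>2) \<le> ennreal ((\<integral>x. (f x)\<^sup>2 \<partial>N) * (\<integral>x. (g x)\<^sup>2 \<partial>N))"
    using CS unfolding e1 e2 e3 by (simp add: ennreal_power[OF nnA, symmetric] ennreal_mult nnB)
  then have "(\<integral>x. \<bar>f x * g x\<bar> \<partial>N)\<^sup>2 \<le> (\<integral>x. (f x)\<^sup>2 \<partial>N) * (\<integral>x. (g x)\<^sup>2 \<partial>N)"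
    using nnB by (subst (asm) ennreal_le_iff) auto
  then have "(\<integral>x. \<bar>f x * g x\<bar> \<partial>N) \<le> sqrt ((\<integral>x. (f x)\<^sup>2 \<partial>N) * (\<integral>x. (g x)\<^sup>2 \<partial>N))"
    by (rule real_le_rsqrt)
  moreover have "\<bar>\<integral>x. f x * g x \<partial>N\<bar> \<le> (\<integral>x. \<bar>f x * g x\<bar> \<partial>N)" by (rule integral_abs_bound)
  ultimately show ?thesis by linarith
qed

locale onb =
  fixes N :: "'b measure" and e :: "nat \<Rightarrow> 'b \<Rightarrow> real"
  assumes fin: "finite_measure N"
    and e_meas[measurable]: "\<And>n. e n \<in> borel_measurable N"
    and e_sq: "\<And>n. integrable N (\<lambda>x. (e n x)\<^sup>2)"
    and e_orth: "\<And>n m. (\<integral>x. e n x * e m x \<partial>N) = (if n = m then 1 else 0)"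
begin

lemma e_prod_int: "g \<in> borel_measurable N \<Longrightarrow> integrable N (\<lambda>x. (g x)\<^sup>2) \<Longrightarrow> integrable N (\<lambda>x. e n x * g x)"
  by (rule sq_int_prod) (auto intro: e_sq)

lemma sum_prod_int:
  assumes [measurable]: "g \<in> borel_measurable N" and "integrable N (\<lambda>x. (g x)\<^sup>2)"
  shows "integrable N (\<lambda>x. (\<Sum>n\<in>I. d n * e n x) * g x)"
  unfolding sum_distrib_right
  by (auto simp: mult.assoc intro!: Bochner_Integration.integrable_sum integrable_mult_right e_prod_int assms)

lemma sum_prod_integral:
  assumes [measurable]: "g \<in> borel_measurable N" and "integrable N (\<lambda>x. (g x)\<^sup>2)"
  shows "(\<integral>x. (\<Sum>n\<in>I. d n * e n x) * g x \<partial>N) = (\<Sum>n\<in>I. d n * (\<integral>x. e n x * g x \<partial>N))"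
  unfolding sum_distrib_right
  by (subst Bochner_Integration.integral_sum) (auto simp: mult.assoc intro!: integrable_mult_right e_prod_int assms)

lemma sum_sq_int: "finite I \<Longrightarrow> integrable N (\<lambda>x. (\<Sum>n\<in>I. d n * e n x)\<^sup>2)"
  by (rule sq_int_sum) (auto simp: power_mult_distrib intro!: integrable_mult_right e_sq)

lemma sum_sq_integral:
  assumes "finite I"
  shows "(\<integral>x. (\<Sum>n\<in>I. d n * e n x)\<^sup>2 \<partial>N) = (\<Sum>n\<in>I. (d n)\<^sup>2)"
proof -
  let ?S = "\<lambda>x. (\<Sum>n\<in>I. d n * e n x)"
  have "(\<integral>x. (?S x)\<^sup>2 \<partial>N) = (\<integral>x. ?S x * ?S x \<partial>N)" by (simp add: power2_eq_square)
  also have "\<dots> = (\<Sum>n\<in>I. d n * (\<integral>x. e n x * ?S x \<partial>N))"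
    by (rule sum_prod_integral) (auto intro: sum_sq_int assms)
  also have "\<dots> = (\<Sum>n\<in>I. d n * d n)"
  proof (rule sum.cong[OF refl])
    fix n assume n: "n \<in> I"
    have "(\<integral>x. e n x * ?S x \<partial>N) = (\<integral>x. ?S x * e n x \<partial>N)" by (simp add: mult.commute)
    also have "\<dots> = (\<Sum>m\<in>I. d m * (\<integral>x. e m x * e n x \<partial>N))"
      by (rule sum_prod_integral) (auto intro: e_sq)
    also have "\<dots> = (\<Sum>m\<in>I. if m = n then d m else 0)"
      by (rule sum.cong) (auto simp: e_orth)
    also have "\<dots> = d n" using n assms by (simp add: sum.delta')
    finally show "d n * (\<integral>x. e n x * ?S x \<partial>N) = d n * d n" by simp
  qed
  finally show ?thesis by (simp add: power2_eq_square)
qed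

lemma bessel_finite:
  assumes [measurable]: "g \<in> borel_measurable N" and g2: "integrable N (\<lambda>x. (g x)\<^sup>2)" and "finite I"
  shows "(\<Sum>n\<in>I. (\<integral>x. e n x * g x \<partial>N)\<^sup>2) \<le> (\<integral>x. (g x)\<^sup>2 \<partial>N)"
proof -
  define b where "b n = (\<integral>x. e n x * g x \<partial>N)" for n
  let ?S = "\<lambda>x. (\<Sum>n\<in>I. b n * e n x)"
  have i1: "integrable N (\<lambda>x. ?S x * g x)" by (rule sum_prod_int) (auto intro: g2)
  have i2: "integrable N (\<lambda>x. (?S x)\<^sup>2)" by (rule sum_sq_int) fact
  have "0 \<le> (\<integral>x. (g x - ?S x)\<^sup>2 \<partial>N)" by simp
  also have "(\<integral>x. (g x - ?S x)\<^sup>2 \<partial>N) = (\<integral>x. (g x)\<^sup>2 - 2 * (?S x * g x) + (?S x)\<^sup>2 \<partial>N)"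
    by (rule Bochner_Integration.integral_cong) (auto simp: power2_diff algebra_simps)
  also have "\<dots> = (\<integral>x. (g x)\<^sup>2 \<partial>N) - 2 * (\<integral>x. ?S x * g x \<partial>N) + (\<integral>x. (?S x)\<^sup>2 \<partial>N)"
    using i1 i2 g2 by simp
  also have "(\<integral>x. ?S x * g x \<partial>N) = (\<Sum>n\<in>I. (b n)\<^sup>2)"
    by (subst sum_prod_integral[OF _ g2]) (auto simp: b_def power2_eq_square)
  also have "(\<integral>x. (?S x)\<^sup>2 \<partial>N) = (\<Sum>n\<in>I. (b n)\<^sup>2)"
    by (rule sum_sq_integral) fact
  finally show ?thesis unfolding b_def by simp
qed

lemma bessel:
  assumes [measurable]: "g \<in> borel_measurable N" and g2: "integrable N (\<lambda>x. (g x)\<^sup>2)"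
  shows "summable (\<lambda>n. (\<integral>x. e n x * g x \<partial>N)\<^sup>2)"
    and "(\<Sum>n. (\<integral>x. e n x * g x \<partial>N)\<^sup>2) \<le> (\<integral>x. (g x)\<^sup>2 \<partial>N)"
proof -
  have b: "(\<Sum>n<K. (\<integral>x. e n x * g x \<partial>N)\<^sup>2) \<le> (\<integral>x. (g x)\<^sup>2 \<partial>N)" for K
    by (rule bessel_finite) (auto intro: g2)
  show s: "summable (\<lambda>n. (\<integral>x. e n x * g x \<partial>N)\<^sup>2)"
    by (rule summableI_nonneg_bounded[OF _ b]) simp
  show "(\<Sum>n. (\<integral>x. e n x * g x \<partial>N)\<^sup>2) \<le> (\<integral>x. (g x)\<^sup>2 \<partial>N)"
    by (rule suminf_le_const[OF s b])
qed

end

context onb begin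

lemma expand:
  assumes ds: "summable (\<lambda>n. (d n)\<^sup>2)"
    and Fs: "\<And>x. x \<in> space N \<Longrightarrow> (\<lambda>n. d n * e n x) sums F x"
    and gm[measurable]: "g \<in> borel_measurable N" and g2: "integrable N (\<lambda>x. (g x)\<^sup>2)"
  shows "F \<in> borel_measurable N" "integrable N (\<lambda>x. (F x)\<^sup>2)" "integrable N (\<lambda>x. F x * g x)"
    "(\<lambda>n. d n * (\<integral>x. e n x * g x \<partial>N)) sums (\<integral>x. F x * g x \<partial>N)"
proof -
  define S where "S M x = (\<Sum>n<M. d n * e n x)" for M x
  have Sm[measurable]: "S M \<in> borel_measurable N" for M unfolding S_def by measurable
  have Slim: "(\<lambda>M. S M x) \<longlonglongrightarrow> F x" if "x \<in> space N" for x
    using Fs[OF that] unfolding sums_def S_def .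
  show Fm[measurable]: "F \<in> borel_measurable N"
    by (rule borel_measurable_LIMSEQ_metric[OF Sm Slim])
  define T where "T M = (\<Sum>n. (d n)\<^sup>2) - (\<Sum>n<M. (d n)\<^sup>2)" for M
  have T_lim: "T \<longlonglongrightarrow> 0"
  proof -
    have "(\<lambda>M. (\<Sum>n<M. (d n)\<^sup>2)) \<longlonglongrightarrow> (\<Sum>n. (d n)\<^sup>2)" using ds by (rule summable_LIMSEQ)
    then have "(\<lambda>M. (\<Sum>n. (d n)\<^sup>2) - (\<Sum>n<M. (d n)\<^sup>2)) \<longlonglongrightarrow> (\<Sum>n. (d n)\<^sup>2) - (\<Sum>n. (d n)\<^sup>2)"
      by (intro tendsto_intros)
    then show ?thesis unfolding T_def by simp
  qed
  have T_nn: "0 \<le> T M" for M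
    unfolding T_def using sum_le_suminf[OF ds, of "{..<M}"] by simp
  have Sdiff: "S K x - S M x = (\<Sum>n\<in>{M..<K}. d n * e n x)" if "M \<le> K" for K M x
    unfolding S_def using sum_diff_nat_ivl[of 0 M K "\<lambda>n. d n * e n x"] that
    by (simp add: atLeast0LessThan)
  have nnK: "(\<integral>\<^sup>+x. ennreal ((S K x - S M x)\<^sup>2) \<partial>N) \<le> ennreal (T M)" if "M \<le> K" for K M
  proof -
    have "(\<integral>\<^sup>+x. ennreal ((S K x - S M x)\<^sup>2) \<partial>N) = (\<integral>\<^sup>+x. ennreal ((\<Sum>n\<in>{M..<K}. d n * e n x)\<^sup>2) \<partial>N)"
      using Sdiff[OF that] by simp
    also have "\<dots> = ennreal (\<integral>x. (\<Sum>n\<in>{M..<K}. d n * e n x)\<^sup>2 \<partial>N)"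
      by (rule nn_integral_eq_integral) (auto intro: sum_sq_int)
    also have "\<dots> = ennreal (\<Sum>n\<in>{M..<K}. (d n)\<^sup>2)" by (simp add: sum_sq_integral)
    also have "\<dots> \<le> ennreal (T M)"
    proof -
      have "(\<Sum>n\<in>{M..<K}. (d n)\<^sup>2) = (\<Sum>n<K. (d n)\<^sup>2) - (\<Sum>n<M. (d n)\<^sup>2)"
        using sum_diff_nat_ivl[of 0 M K "\<lambda>n. (d n)\<^sup>2"] that by (simp add: atLeast0LessThan)
      also have "\<dots> \<le> T M" unfolding T_def using sum_le_suminf[OF ds, of "{..<K}"] by simp
      finally show ?thesis by (rule ennreal_leI)
    qed
    finally show ?thesis .
  qed
  have nnF: "(\<integral>\<^sup>+x. ennreal ((F x - S M x)\<^sup>2) \<partial>N) \<le> ennreal (T M)" for M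
  proof -
    have "(\<integral>\<^sup>+x. ennreal ((F x - S M x)\<^sup>2) \<partial>N) = (\<integral>\<^sup>+x. liminf (\<lambda>K. ennreal ((S K x - S M x)\<^sup>2)) \<partial>N)"
    proof (rule nn_integral_cong)
      fix x assume x: "x \<in> space N"
      have "(\<lambda>K. ennreal ((S K x - S M x)\<^sup>2)) \<longlonglongrightarrow> ennreal ((F x - S M x)\<^sup>2)"
        by (intro tendsto_intros Slim x)
      then show "ennreal ((F x - S M x)\<^sup>2) = liminf (\<lambda>K. ennreal ((S K x - S M x)\<^sup>2))"
        by (rule lim_imp_Liminf[symmetric, rotated]) simp
    qed
    also have "\<dots> \<le> liminf (\<lambda>K. (\<integral>\<^sup>+x. ennreal ((S K x - S M x)\<^sup>2) \<partial>N))"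
      by (rule nn_integral_liminf) measurable
    also have "\<dots> \<le> limsup (\<lambda>K. (\<integral>\<^sup>+x. ennreal ((S K x - S M x)\<^sup>2) \<partial>N))"
      by (rule Liminf_le_Limsup) simp
    also have "\<dots> \<le> ennreal (T M)"
      by (rule Limsup_bounded) (auto intro!: nnK simp: eventually_sequentially)
    finally show ?thesis .
  qed
  have intFS: "integrable N (\<lambda>x. (F x - S M x)\<^sup>2)" for M
  proof (rule integrableI_bounded)
    show "(\<lambda>x. (F x - S M x)\<^sup>2) \<in> borel_measurable N" by measurable
    have "(\<integral>\<^sup>+x. ennreal (norm ((F x - S M x)\<^sup>2)) \<partial>N) = (\<integral>\<^sup>+x. ennreal ((F x - S M x)\<^sup>2) \<partial>N)"
      by simp
    also have "\<dots> < \<infinity>" using nnF[of M] by (simp add: order_le_less_trans)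
    finally show "(\<integral>\<^sup>+x. ennreal (norm ((F x - S M x)\<^sup>2)) \<partial>N) < \<infinity>" .
  qed
  show F2: "integrable N (\<lambda>x. (F x)\<^sup>2)" using intFS[of 0] by (simp add: S_def)
  show Fg: "integrable N (\<lambda>x. F x * g x)" by (rule sq_int_prod) (auto intro: F2 g2)
  have realFS: "(\<integral>x. (F x - S M x)\<^sup>2 \<partial>N) \<le> T M" for M
  proof -
    have "ennreal (\<integral>x. (F x - S M x)\<^sup>2 \<partial>N) = (\<integral>\<^sup>+x. ennreal ((F x - S M x)\<^sup>2) \<partial>N)"
      by (rule nn_integral_eq_integral[symmetric]) (auto intro: intFS)
    also have "\<dots> \<le> ennreal (T M)" by (rule nnF)
    finally show ?thesis using T_nn[of M] by simp
  qed
  define G where "G = (\<integral>x. (g x)\<^sup>2 \<partial>N)"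
  have G_nn: "0 \<le> G" unfolding G_def by simp
  have err: "\<bar>(\<Sum>n<M. d n * (\<integral>x. e n x * g x \<partial>N)) - (\<integral>x. F x * g x \<partial>N)\<bar> \<le> sqrt (T M * G)" for M
  proof -
    have SMg: "integrable N (\<lambda>x. S M x * g x)" unfolding S_def by (rule sum_prod_int) (auto intro: g2)
    have "(\<Sum>n<M. d n * (\<integral>x. e n x * g x \<partial>N)) = (\<integral>x. S M x * g x \<partial>N)"
      unfolding S_def by (rule sum_prod_integral[symmetric]) (auto intro: g2)
    then have "(\<Sum>n<M. d n * (\<integral>x. e n x * g x \<partial>N)) - (\<integral>x. F x * g x \<partial>N)
        = - (\<integral>x. (F x - S M x) * g x \<partial>N)"
      using SMg Fg by (simp add: left_diff_distrib)
    then have "\<bar>(\<Sum>n<M. d n * (\<integral>x. e n x * g x \<partial>N)) - (\<integral>x. F x * g x \<partial>N)\<bar>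
        = \<bar>\<integral>x. (F x - S M x) * g x \<partial>N\<bar>" by simp
    also have "\<dots> \<le> sqrt ((\<integral>x. (F x - S M x)\<^sup>2 \<partial>N) * G)"
      unfolding G_def by (rule CS_real) (auto intro: intFS g2)
    also have "\<dots> \<le> sqrt (T M * G)"
      using realFS[of M] G_nn by (intro real_sqrt_le_mono mult_right_mono) auto
    finally show ?thesis .
  qed
  have "(\<lambda>M. (\<Sum>n<M. d n * (\<integral>x. e n x * g x \<partial>N)) - (\<integral>x. F x * g x \<partial>N)) \<longlonglongrightarrow> 0"
  proof (rule Lim_null_comparison)
    show "\<forall>\<^sub>F M in sequentially. norm ((\<Sum>n<M. d n * (\<integral>x. e n x * g x \<partial>N)) - (\<integral>x. F x * g x \<partial>N)) \<le> sqrt (T M * G)"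
      using err by simp
    have "(\<lambda>M. sqrt (T M * G)) \<longlonglongrightarrow> sqrt (0 * G)" by (intro tendsto_intros T_lim)
    then show "(\<lambda>M. sqrt (T M * G)) \<longlonglongrightarrow> 0" by simp
  qed
  then show "(\<lambda>n. d n * (\<integral>x. e n x * g x \<partial>N)) sums (\<integral>x. F x * g x \<partial>N)"
    unfolding sums_def by (rule LIM_zero_cancel)
qed

end

lemma sq_int_int:
  fixes f :: "'b \<Rightarrow> real"
  assumes "finite_measure N" and [measurable]: "f \<in> borel_measurable N" and "integrable N (\<lambda>x. (f x)\<^sup>2)"
  shows "integrable N f"
proof -
  have "integrable N (\<lambda>x. f x * 1)"
    by (rule sq_int_prod) (auto intro: assms finite_measure.integrable_const[OF assms(1)])
  then show ?thesis by simp
qed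

lemma sign1:
  fixes f :: "'b \<Rightarrow> real"
  assumes fin: "finite_measure N" and [measurable]: "f \<in> borel_measurable N"
    and f2: "integrable N (\<lambda>x. (f x)\<^sup>2)" and one: "(\<integral>x. (f x)\<^sup>2 \<partial>N) = 1"
    and b: "1 \<le> (\<integral>x. f x * \<bar>f x\<bar> \<partial>N)"
  shows "(\<integral>x. f x \<partial>N) \<noteq> 0"
proof
  assume f0: "(\<integral>x. f x \<partial>N) = 0"
  have fi: "integrable N f" by (rule sq_int_int[OF fin]) (auto intro: f2)
  have ffi: "integrable N (\<lambda>x. f x * \<bar>f x\<bar>)" by (rule sq_int_prod) (auto intro: f2)
  have hi: "integrable N (\<lambda>x. (f x)\<^sup>2 - f x * \<bar>f x\<bar>)" using f2 ffi by auto
  have hnn: "0 \<le> (f x)\<^sup>2 - f x * \<bar>f x\<bar>" for x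
    by (cases "0 \<le> f x") (auto simp: power2_eq_square)
  have "(\<integral>x. (f x)\<^sup>2 - f x * \<bar>f x\<bar> \<partial>N) = 1 - (\<integral>x. f x * \<bar>f x\<bar> \<partial>N)"
    using f2 ffi one by simp
  moreover have "0 \<le> (\<integral>x. (f x)\<^sup>2 - f x * \<bar>f x\<bar> \<partial>N)" using hnn by simp
  ultimately have "(\<integral>x. (f x)\<^sup>2 - f x * \<bar>f x\<bar> \<partial>N) = 0" using b by linarith
  then have "AE x in N. (f x)\<^sup>2 - f x * \<bar>f x\<bar> = 0"
    using integral_nonneg_eq_0_iff_AE[OF hi] hnn by simp
  then have ae: "AE x in N. f x = \<bar>f x\<bar>"
    by eventually_elim (auto simp: power2_eq_square split: if_splits abs_split)
  then have "(\<integral>x. \<bar>f x\<bar> \<partial>N) = 0" using f0 by (subst integral_cong_AE[of _ _ f]) auto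
  then have "AE x in N. \<bar>f x\<bar> = 0"
    using integral_nonneg_eq_0_iff_AE[of N "\<lambda>x. \<bar>f x\<bar>"] fi by simp
  then have "AE x in N. (f x)\<^sup>2 = 0" by eventually_elim simp
  then have "(\<integral>x. (f x)\<^sup>2 \<partial>N) = 0" by (subst integral_cong_AE[of _ _ "\<lambda>x. 0"]) auto
  with one show False by simp
qed

lemma sign:
  fixes f :: "'b \<Rightarrow> real"
  assumes fin: "finite_measure N" and [measurable]: "f \<in> borel_measurable N"
    and f2: "integrable N (\<lambda>x. (f x)\<^sup>2)" and one: "(\<integral>x. (f x)\<^sup>2 \<partial>N) = 1"
    and b: "1 \<le> (\<integral>x. f x * \<bar>f x\<bar> \<partial>N)\<^sup>2"
  shows "(\<integral>x. f x \<partial>N) \<noteq> 0"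
proof (cases "0 \<le> (\<integral>x. f x * \<bar>f x\<bar> \<partial>N)")
  case True
  then have "1 \<le> (\<integral>x. f x * \<bar>f x\<bar> \<partial>N)" using b
    using power2_le_imp_le[of 1 "\<integral>x. f x * \<bar>f x\<bar> \<partial>N"] by simp
  then show ?thesis by (rule sign1[OF fin assms(2) f2 one])
next
  case False
  then have "1 \<le> - (\<integral>x. f x * \<bar>f x\<bar> \<partial>N)" using b
    using power2_le_imp_le[of 1 "- (\<integral>x. f x * \<bar>f x\<bar> \<partial>N)"] by simp
  then have "1 \<le> (\<integral>x. - f x * \<bar>- f x\<bar> \<partial>N)" by simp
  then have "(\<integral>x. - f x \<partial>N) \<noteq> 0" by (intro sign1[OF fin _ _ _]) (use f2 one in auto)
  then show ?thesis by simp
qed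

context onb begin

lemma ground:
  fixes l :: "nat \<Rightarrow> real" and s :: real and K :: "'b \<Rightarrow> 'b \<Rightarrow> real"
  assumes l0: "0 < l 0" and l01: "l 0 < l 1" and lge: "\<And>n. 1 \<le> n \<Longrightarrow> l 1 \<le> l n" and s: "0 < s"
    and dsum: "\<And>x. x \<in> space N \<Longrightarrow> summable (\<lambda>n. (exp (- l n * s) * e n x)\<^sup>2)"
    and Ks: "\<And>x y. x \<in> space N \<Longrightarrow> y \<in> space N \<Longrightarrow> (\<lambda>n. exp (- l n * s) * e n x * e n y) sums K x y"
    and Kpos: "\<And>x. x \<in> space N \<Longrightarrow> AE y in N. 0 \<le> K x y"
  shows "(\<integral>x. e 0 x \<partial>N) \<noteq> 0"
proof -
  define f where "f x = \<bar>e 0 x\<bar>" for x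
  have fm[measurable]: "f \<in> borel_measurable N" unfolding f_def by measurable
  have f2: "integrable N (\<lambda>x. (f x)\<^sup>2)" unfolding f_def using e_sq[of 0] by simp
  have ff: "(\<integral>x. (f x)\<^sup>2 \<partial>N) = 1" unfolding f_def using e_orth[of 0 0] by (simp add: power2_eq_square)
  define b where "b n = (\<integral>x. e n x * f x \<partial>N)" for n
  define G where "G x = (\<integral>y. K x y * f y \<partial>N)" for x
  have pt: "exp (- l 0 * s) * f x \<le> G x" and Gs: "(\<lambda>n. (exp (- l n * s) * b n) * e n x) sums G x"
    if x: "x \<in> space N" for x
  proof -
    have ds: "summable (\<lambda>n. (exp (- l n * s) * e n x)\<^sup>2)" by (rule dsum[OF x])
    have Fs: "\<And>y. y \<in> space N \<Longrightarrow> (\<lambda>n. (exp (- l n * s) * e n x) * e n y) sums K x y"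
      by (rule Ks[OF x])
    note E0 = expand[OF ds Fs e_meas[of 0] e_sq[of 0]]
    note Ef = expand[OF ds Fs fm f2]
    have "(\<lambda>n. exp (- l n * s) * e n x * (\<integral>y. e n y * e 0 y \<partial>N)) = (\<lambda>n. if n = 0 then exp (- l 0 * s) * e 0 x else 0)"
      by (auto simp: e_orth fun_eq_iff)
    moreover have "(\<lambda>n. if n = 0 then exp (- l 0 * s) * e 0 x else 0) sums (exp (- l 0 * s) * e 0 x)"
      using sums_single[of 0 "\<lambda>_. exp (- l 0 * s) * e 0 x"] by simp
    ultimately have i0: "(\<integral>y. K x y * e 0 y \<partial>N) = exp (- l 0 * s) * e 0 x"
      using E0(4) sums_unique2 by metis
    have "\<bar>\<integral>y. K x y * e 0 y \<partial>N\<bar> \<le> (\<integral>y. \<bar>K x y * e 0 y\<bar> \<partial>N)" by (rule integral_abs_bound)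
    also have "\<dots> = G x" unfolding G_def
    proof (rule integral_cong_AE)
      show "(\<lambda>y. \<bar>K x y * e 0 y\<bar>) \<in> borel_measurable N" using E0(1) by measurable
      show "(\<lambda>y. K x y * f y) \<in> borel_measurable N" using Ef(1) by measurable
      show "AE y in N. \<bar>K x y * e 0 y\<bar> = K x y * f y"
        using Kpos[OF x] by eventually_elim (simp add: f_def abs_mult)
    qed
    finally show "exp (- l 0 * s) * f x \<le> G x" using i0 by (simp add: f_def abs_mult)
    have "(\<lambda>n. exp (- l n * s) * e n x * b n) sums G x" unfolding b_def G_def by (rule Ef(4))
    then show "(\<lambda>n. (exp (- l n * s) * b n) * e n x) sums G x" by (simp add: ac_simps)
  qed
  note bes = bessel[OF fm f2]
  have bsum: "summable (\<lambda>n. (b n)\<^sup>2)" using bes(1) unfolding b_def .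
  have bB: "(\<Sum>n. (b n)\<^sup>2) \<le> 1" using bes(2) ff unfolding b_def by simp
  have ds2: "summable (\<lambda>n. (exp (- l n * s) * b n)\<^sup>2)"
  proof (rule summable_comparison_test[OF _ bsum])
    have "(exp (- l n * s))\<^sup>2 \<le> 1" for n
    proof -
      have "0 \<le> l n" using l0 l01 lge[of n] by (cases "n = 0") auto
      then have "exp (- l n * s) \<le> 1" using s by simp
      moreover have "0 \<le> exp (- l n * s)" by simp
      ultimately show ?thesis by (simp add: power_le_one)
    qed
    then show "\<exists>N. \<forall>n\<ge>N. norm ((exp (- l n * s) * b n)\<^sup>2) \<le> (b n)\<^sup>2"
      by (auto simp: power_mult_distrib intro!: mult_left_le_one_le)
  qed
  note EG = expand[OF ds2 Gs fm f2]
  have sG: "(\<lambda>n. exp (- l n * s) * (b n)\<^sup>2) sums (\<integral>x. G x * f x \<partial>N)"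
    using EG(4) unfolding b_def by (simp add: power2_eq_square ac_simps)
  have lowG: "exp (- l 0 * s) \<le> (\<integral>x. G x * f x \<partial>N)"
  proof -
    have "exp (- l 0 * s) = (\<integral>x. exp (- l 0 * s) * f x * f x \<partial>N)"
      using ff by (simp add: power2_eq_square mult.assoc)
    also have "\<dots> \<le> (\<integral>x. G x * f x \<partial>N)"
    proof (rule Bochner_Integration.integral_mono)
      show "integrable N (\<lambda>x. exp (- l 0 * s) * f x * f x)"
        using f2 by (simp add: power2_eq_square mult.assoc)
      show "integrable N (\<lambda>x. G x * f x)" by (rule EG(3))
      fix x assume "x \<in> space N"
      then show "exp (- l 0 * s) * f x * f x \<le> G x * f x"
        using pt by (intro mult_right_mono) (auto simp: f_def)
    qed
    finally show ?thesis .
  qed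
  define c where "c = exp (- l 0 * s) - exp (- l 1 * s)"
  have c_pos: "0 < c" unfolding c_def using l01 s by simp
  define h where "h n = exp (- l 1 * s) * (b n)\<^sup>2 + (if n = 0 then c * (b 0)\<^sup>2 else 0)" for n
  have hs: "h sums (exp (- l 1 * s) * (\<Sum>n. (b n)\<^sup>2) + c * (b 0)\<^sup>2)"
    unfolding h_def
    by (intro sums_add sums_mult summable_sums bsum) (rule sums_single)
  have "(\<integral>x. G x * f x \<partial>N) \<le> exp (- l 1 * s) * (\<Sum>n. (b n)\<^sup>2) + c * (b 0)\<^sup>2"
  proof (rule sums_le[OF _ sG hs])
    fix n show "exp (- l n * s) * (b n)\<^sup>2 \<le> h n"
    proof (cases "n = 0")
      case True then show ?thesis by (simp add: h_def c_def algebra_simps)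
    next
      case False
      then have "exp (- l n * s) \<le> exp (- l 1 * s)" using lge[of n] s by simp
      then show ?thesis using False by (simp add: h_def mult_right_mono)
    qed
  qed
  also have "\<dots> \<le> exp (- l 1 * s) + c * (b 0)\<^sup>2"
    using bB by simp
  finally have "exp (- l 0 * s) \<le> exp (- l 1 * s) + c * (b 0)\<^sup>2" using lowG by linarith
  then have "c * 1 \<le> c * (b 0)\<^sup>2" unfolding c_def by simp
  then have "1 \<le> (b 0)\<^sup>2" using c_pos by simp
  then have "1 \<le> (\<integral>x. e 0 x * \<bar>e 0 x\<bar> \<partial>N)\<^sup>2" unfolding b_def f_def .
  then show ?thesis using sign[OF fin e_meas[of 0] e_sq[of 0]] e_orth[of 0 0] by (simp add: power2_eq_square)
qed

end

lemma phi_pos: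
  assumes nu: "infinite_levy_measure \<nu>" and l: "0 < l"
  shows "0 < laplace_exponent \<nu> l"
proof -
  have sets: "sets \<nu> = sets borel" and z: "emeasure \<nu> {..0} = 0"
    and fin: "(\<integral>\<^sup>+ x. ennreal (min 1 x) \<partial>\<nu>) < \<infinity>" and inf: "emeasure \<nu> {0<..} = \<infinity>"
    using nu unfolding infinite_levy_measure_def by blast+
  have sp: "space \<nu> = UNIV" using sets_eq_imp_space_eq[OF sets] by simp
  have mcong: "\<And>M. measurable \<nu> M = measurable borel M"
    by (rule measurable_cong_sets) (auto simp: sets)
  have fm[measurable]: "(\<lambda>x::real. 1 - exp (- l * x)) \<in> borel_measurable \<nu>"
    unfolding mcong by measurable
  have mm: "(\<lambda>x::real. ennreal (min 1 x)) \<in> borel_measurable \<nu>"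
    unfolding mcong by measurable
  have pos: "AE x in \<nu>. 0 < x"
  proof -
    have zs: "{..0} \<in> null_sets \<nu>" by (rule null_setsI[OF z]) (simp add: sets)
    show ?thesis by (rule AE_I'[OF zs]) (simp add: subset_eq not_less)
  qed
  have bnd: "1 - exp (- l * x) \<le> max 1 l * min 1 x" if "0 < x" for x
  proof (cases "x \<le> 1")
    case True
    have "1 + (- l * x) \<le> exp (- l * x)" by (rule exp_ge_add_one_self)
    then have "1 - exp (- l * x) \<le> l * x" by simp
    also have "\<dots> \<le> max 1 l * x" using that by (intro mult_right_mono) auto
    finally show ?thesis using True by simp
  next
    case False
    have "1 - exp (- l * x) \<le> 1" by simp
    also have "\<dots> \<le> max 1 l" by simp
    finally show ?thesis using False by simp
  qed
  have nn: "0 \<le> 1 - exp (- l * x)" if "0 < x" for x using that l by simp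
  have int: "integrable \<nu> (\<lambda>x. 1 - exp (- l * x))"
  proof (rule integrableI_bounded)
    show "(\<lambda>x. 1 - exp (- l * x)) \<in> borel_measurable \<nu>" by (rule fm)
    have "(\<integral>\<^sup>+x. ennreal (norm (1 - exp (- l * x))) \<partial>\<nu>) \<le> (\<integral>\<^sup>+x. ennreal (max 1 l) * ennreal (min 1 x) \<partial>\<nu>)"
    proof (rule nn_integral_mono_AE)
      show "AE x in \<nu>. ennreal (norm (1 - exp (- l * x))) \<le> ennreal (max 1 l) * ennreal (min 1 x)"
        using pos
      proof eventually_elim
        case (elim x)
        then have "norm (1 - exp (- l * x)) \<le> max 1 l * min 1 x" using bnd nn by simp
        then show ?case using elim by (simp add: ennreal_mult[symmetric] ennreal_leI)
      qed
    qed
    also have "\<dots> = ennreal (max 1 l) * (\<integral>\<^sup>+x. ennreal (min 1 x) \<partial>\<nu>)"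
      by (rule nn_integral_cmult[OF mm])
    also have "\<dots> < \<infinity>" using fin by (simp add: ennreal_mult_less_top)
    finally show "(\<integral>\<^sup>+x. ennreal (norm (1 - exp (- l * x))) \<partial>\<nu>) < \<infinity>" .
  qed
  have ae_nn: "AE x in \<nu>. 0 \<le> 1 - exp (- l * x)" using pos by eventually_elim (rule nn)
  have ge: "0 \<le> laplace_exponent \<nu> l" unfolding laplace_exponent_def
    by (rule integral_nonneg_AE[OF ae_nn])
  have ne: "laplace_exponent \<nu> l \<noteq> 0"
  proof
    assume "laplace_exponent \<nu> l = 0"
    then have "AE x in \<nu>. 1 - exp (- l * x) = 0"
      using integral_nonneg_eq_0_iff_AE[OF int ae_nn] unfolding laplace_exponent_def by simp
    then have "AE x in \<nu>. False" using pos by eventually_elim (use l in auto)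
    then obtain Z where Z: "{x \<in> space \<nu>. \<not> False} \<subseteq> Z" "emeasure \<nu> Z = 0" "Z \<in> sets \<nu>"
      by (rule AE_E)
    have "emeasure \<nu> {0<..} \<le> emeasure \<nu> Z" using Z sp by (intro emeasure_mono) auto
    then show False using Z inf by simp
  qed
  show ?thesis using ge ne by simp
qed

lemma asym:
  fixes Q :: "real \<Rightarrow> real"
  assumes phi: "0 < \<phi>" and c: "0 < c"
    and bnd: "\<And>t. 0 \<le> t \<Longrightarrow> c * exp (- t * \<phi>) \<le> Q t \<and> Q t \<le> C * exp (- t * \<phi>)"
  shows "(\<lambda>t. ln (Q t)) \<sim>[at_top] (\<lambda>t. - t * \<phi>)"
proof (rule asymp_equivI')
  have C: "0 < C" using bnd[of 0] c by simp
  have low: "ln c - t * \<phi> \<le> ln (Q t)" and up: "ln (Q t) \<le> ln C - t * \<phi>" if "0 \<le> t" for t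
  proof -
    have q: "c * exp (- t * \<phi>) \<le> Q t" "Q t \<le> C * exp (- t * \<phi>)" using bnd[OF that] by auto
    have "0 < c * exp (- t * \<phi>)" using c by simp
    then have qp: "0 < Q t" using q(1) by linarith
    have "ln (c * exp (- t * \<phi>)) \<le> ln (Q t)" using q(1) c qp by (subst ln_le_cancel_iff) auto
    then show "ln c - t * \<phi> \<le> ln (Q t)" using c by (simp add: ln_mult)
    have "ln (Q t) \<le> ln (C * exp (- t * \<phi>))" using q(2) C qp by (subst ln_le_cancel_iff) auto
    then show "ln (Q t) \<le> ln C - t * \<phi>" using C by (simp add: ln_mult)
  qed
  have lim: "((\<lambda>t. 1 - a / (t * \<phi>)) \<longlongrightarrow> 1) at_top" for a
  proof -
    have "filterlim (\<lambda>t. \<phi> * t) at_top at_top"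
      by (rule filterlim_tendsto_pos_mult_at_top[OF tendsto_const phi filterlim_ident])
    then have "filterlim (\<lambda>t. t * \<phi>) at_infinity at_top"
      by (simp add: mult.commute filterlim_at_top_imp_at_infinity)
    then have "((\<lambda>t. a / (t * \<phi>)) \<longlongrightarrow> 0) at_top" by (rule tendsto_divide_0[OF tendsto_const])
    then have "((\<lambda>t. 1 - a / (t * \<phi>)) \<longlongrightarrow> 1 - 0) at_top" by (intro tendsto_intros)
    then show ?thesis by simp
  qed
  show "((\<lambda>t. ln (Q t) / (- t * \<phi>)) \<longlongrightarrow> 1) at_top"
  proof (rule tendsto_sandwich[OF _ _ lim[of "ln C"] lim[of "ln c"]])
    show "\<forall>\<^sub>F t in at_top. 1 - ln C / (t * \<phi>) \<le> ln (Q t) / (- t * \<phi>)"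
      using eventually_gt_at_top[of 0]
    proof eventually_elim
      case (elim t)
      have tp: "0 < t * \<phi>" using elim phi by simp
      have "1 - ln C / (t * \<phi>) = (t * \<phi> - ln C) / (t * \<phi>)" using tp elim phi by (simp add: diff_divide_distrib)
      also have "\<dots> \<le> (- ln (Q t)) / (t * \<phi>)" using up[of t] elim tp by (intro divide_right_mono) auto
      also have "\<dots> = ln (Q t) / (- t * \<phi>)" by simp
      finally show ?case .
    qed
    show "\<forall>\<^sub>F t in at_top. ln (Q t) / (- t * \<phi>) \<le> 1 - ln c / (t * \<phi>)"
      using eventually_gt_at_top[of 0]
    proof eventually_elim
      case (elim t)
      have tp: "0 < t * \<phi>" using elim phi by simp
      have "ln (Q t) / (- t * \<phi>) = (- ln (Q t)) / (t * \<phi>)" by simp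
      also have "\<dots> \<le> (t * \<phi> - ln c) / (t * \<phi>)" using low[of t] elim tp by (intro divide_right_mono) auto
      also have "\<dots> = 1 - ln c / (t * \<phi>)" using tp elim phi by (simp add: diff_divide_distrib)
      finally show ?case .
    qed
  qed
qed

lemma exit_pos:
  fixes Y :: "real \<Rightarrow> 'a \<Rightarrow> 'b::euclidean_space"
  assumes cad: "cadlag_path (\<lambda>s. Y s \<omega>)" and Y0: "Y 0 \<omega> = 0" and op: "open \<Omega>" and x: "x \<in> \<Omega>"
  shows "ereal 0 < exit_time \<Omega> (\<lambda>s. x + Y s \<omega>)"
proof -
  have "continuous (at_right 0) (\<lambda>s. Y s \<omega>)" using cad unfolding cadlag_path_def by auto
  then have "((\<lambda>s. Y s \<omega>) \<longlongrightarrow> 0) (at_right 0)" using Y0 unfolding continuous_within by simp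
  then have "((\<lambda>s. x + Y s \<omega>) \<longlongrightarrow> x + 0) (at_right 0)" by (intro tendsto_intros)
  then have "eventually (\<lambda>s. x + Y s \<omega> \<in> \<Omega>) (at_right 0)"
    using op x by (intro topological_tendstoD) auto
  then obtain b where b: "b > 0" "\<And>s. 0 < s \<Longrightarrow> s < b \<Longrightarrow> x + Y s \<omega> \<in> \<Omega>"
    unfolding eventually_at_right_field by auto
  have "ereal b \<le> exit_time \<Omega> (\<lambda>s. x + Y s \<omega>)" unfolding exit_time_def
  proof (rule Inf_greatest)
    fix z assume "z \<in> ereal ` {t. t > 0 \<and> x + Y t \<omega> \<notin> \<Omega>}"
    then obtain t where "z = ereal t" "t > 0" "x + Y t \<omega> \<notin> \<Omega>" by auto
    then show "ereal b \<le> z" using b by (cases "t < b") auto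
  qed
  moreover have "ereal 0 < ereal b" using b by simp
  ultimately show ?thesis by (rule less_le_trans[rotated])
qed

lemma exit_le:
  assumes "0 < s" "f s \<notin> \<Omega>"
  shows "\<not> ereal s < exit_time \<Omega> f"
proof -
  have "exit_time \<Omega> f \<le> ereal s" unfolding exit_time_def by (rule Inf_lower) (use assms in auto)
  then show ?thesis by simp
qed

theorem proposition3p3:
  fixes M :: "'a measure"
    and Y :: "real \<Rightarrow> 'a \<Rightarrow> real ^ 'd"
    and D :: "real \<Rightarrow> 'a \<Rightarrow> real"
    and \<nu> :: "real measure"
    and \<Omega> :: "(real ^ 'd) set"
    and \<alpha> :: real
    and lam :: "nat \<Rightarrow> real"
    and \<psi> :: "nat \<Rightarrow> real ^ 'd \<Rightarrow> real"
  assumes "0 < \<alpha>" and "\<alpha> \<le> 2"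
    and "isotropic_stable M \<alpha> Y"
    and "open \<Omega>" and "bounded \<Omega>"
    and "killed_eigenpairs M Y \<Omega> lam \<psi>"
    and "subordinator M D \<nu>"
    and "prob_space.indep_set M (process_sigma M Y) (process_sigma M D)"
  shows "(\<lambda>t. ln (subordinate_heat_content M Y D \<Omega> t))
           \<sim>[at_top] (\<lambda>t. - t * laplace_exponent \<nu> (lam 1))"
proof -
  note kp = assms(6)[unfolded killed_eigenpairs_def]
  have psim: "\<psi> n \<in> borel_measurable borel" if "1 \<le> n" for n using kp that by blast
  have psim'[measurable]: "\<psi> (Suc n) \<in> borel_measurable borel" for n by (rule psim) simp
  have psisq: "set_integrable lborel \<Omega> (\<lambda>x. (\<psi> n x)\<^sup>2)" if "1 \<le> n" for n using kp that by blast
  have psiorth: "(LINT x:\<Omega>|lborel. \<psi> n x * \<psi> m x) = (if n = m then 1 else 0)"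
    if "1 \<le> n" "1 \<le> m" for n m using kp that by blast
  have lam1: "0 < lam 1" and lam12: "lam 1 < lam 2" using kp by blast+
  have lammono: "lam n \<le> lam (Suc n)" if "2 \<le> n" for n using kp that by blast
  have summ: "summable (\<lambda>n. exp (- lam (Suc n) * t) * \<psi> (Suc n) x * \<psi> (Suc n) y)"
    if "0 < t" "x \<in> \<Omega>" "y \<in> \<Omega>" for t x y using kp that by blast
  have dens: "measure M {\<omega>\<in>space M. ereal t < exit_time \<Omega> (\<lambda>s. x + Y s \<omega>) \<and> x + Y t \<omega> \<in> A}
        = (LINT y:A|lborel. (\<Sum>n. exp (- lam (Suc n) * t) * \<psi> (Suc n) x * \<psi> (Suc n) y))"
    if "0 < t" "x \<in> \<Omega>" "A \<in> sets borel" "A \<subseteq> \<Omega>" for t x A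
    using kp that by blast
  have lam2: "lam 2 \<le> lam (Suc n)" if "1 \<le> n" for n
    using that
  proof (induction n rule: dec_induct)
    case base then show ?case by (simp add: numeral_2_eq_2)
  next
    case (step n)
    then show ?case using lammono[of "Suc n"] by simp
  qed
  define l where "l n = lam (Suc n)" for n
  have l0eq: "l 0 = lam 1" by (simp add: l_def)
  have l0: "0 < l 0" using lam1 by (simp add: l_def)
  have l01: "l 0 < l 1" using lam12 by (simp add: l_def numeral_2_eq_2)
  have lge: "l 1 \<le> l n" if "1 \<le> n" for n using lam2[OF that] by (simp add: l_def numeral_2_eq_2)
  have lmin: "l 0 \<le> l n" for n using l01 lge[of n] by (cases "n = 0") auto
  have lpos: "0 < l n" for n using l0 lmin[of n] by simp

  have \<Omega>B[measurable]: "\<Omega> \<in> sets borel" using assms(4) by simp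
  define N where "N = restrict_space lborel \<Omega>"
  have \<Omega>L: "\<Omega> \<inter> space lborel \<in> sets lborel" by simp
  have spN: "space N = \<Omega>" by (simp add: N_def space_restrict_space)
  have intN: "integrable N f \<longleftrightarrow> set_integrable lborel \<Omega> f" for f :: "real ^ 'd \<Rightarrow> real"
    by (simp add: N_def integrable_restrict_space[OF \<Omega>L] set_integrable_def)
  have integN: "integral\<^sup>L N f = set_lebesgue_integral lborel \<Omega> f" for f :: "real ^ 'd \<Rightarrow> real"
    by (simp add: N_def integral_restrict_space[OF \<Omega>L] set_lebesgue_integral_def)
  have measN: "f \<in> borel_measurable N" if "f \<in> borel_measurable borel" for f :: "real ^ 'd \<Rightarrow> real"
    unfolding N_def by (rule measurable_restrict_space1) (use that in simp)
  have finO: "emeasure lborel \<Omega> < \<infinity>" by (rule emeasure_bounded_finite[OF assms(5)])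
  have finN: "finite_measure N"
  proof (rule finite_measureI)
    have "emeasure N (space N) = emeasure lborel \<Omega>"
      unfolding spN unfolding N_def by (rule emeasure_restrict_space[OF \<Omega>L]) simp
    then show "emeasure N (space N) \<noteq> \<infinity>" using finO by simp
  qed
  define e where "e n = \<psi> (Suc n)" for n
  interpret onb N e
  proof (rule onb.intro)
    show "finite_measure N" by (rule finN)
    show "e n \<in> borel_measurable N" for n unfolding e_def by (rule measN) simp
    show "integrable N (\<lambda>x. (e n x)\<^sup>2)" for n unfolding e_def intN by (rule psisq) simp
    show "(\<integral>x. e n x * e m x \<partial>N) = (if n = m then 1 else 0)" for n m
      unfolding e_def integN using psiorth[of "Suc n" "Suc m"] by simp
  qed
  have om: "(\<lambda>x. 1::real) \<in> borel_measurable N" by simp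
  have o2: "integrable N (\<lambda>x. (1::real)\<^sup>2)" by (simp add: finite_measure.integrable_const[OF finN])
  define C where "C = measure lborel \<Omega>"
  have "measure N \<Omega> = measure lborel \<Omega>"
    unfolding N_def by (rule measure_restrict_space[OF \<Omega>L]) simp
  then have measNsp: "measure N (space N) = C" unfolding C_def spN .
  define a where "a n = (\<integral>x. e n x * 1 \<partial>N)" for n
  note bes1 = bessel[OF om o2]
  have asum: "summable (\<lambda>n. (a n)\<^sup>2)" using bes1(1) unfolding a_def .
  have aC: "(\<Sum>n. (a n)\<^sup>2) \<le> C" using bes1(2) measNsp unfolding a_def by simp
  have a0C: "(a 0)\<^sup>2 \<le> C"
    using sum_le_suminf[OF asum, of "{0}"] aC by simp

  define pK where "pK s x y = (\<Sum>n. exp (- l n * s) * e n x * e n y)" for s x y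
  have Ks: "(\<lambda>n. exp (- l n * s) * e n x * e n y) sums pK s x y"
    if "0 < s" "x \<in> \<Omega>" "y \<in> \<Omega>" for s x y
    unfolding pK_def l_def e_def by (rule summable_sums[OF summ[OF that]])
  have dsum: "summable (\<lambda>n. (exp (- l n * s) * e n x)\<^sup>2)" if "0 < s" "x \<in> \<Omega>" for s x
  proof -
    have s2: "0 < 2 * s" using that by simp
    have eq: "(exp (- l n * s) * e n x)\<^sup>2 = exp (- lam (Suc n) * (2 * s)) * \<psi> (Suc n) x * \<psi> (Suc n) x" for n
    proof -
      have "exp (- l n * s) * exp (- l n * s) = exp (- l n * (2 * s))"
        by (simp only: mult_exp_exp) (simp add: algebra_simps)
      then show ?thesis by (simp add: power2_eq_square l_def e_def algebra_simps)
    qed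
    show ?thesis unfolding eq by (rule summ[OF s2 that(2) that(2)])
  qed
  have pKm[measurable]: "pK s x \<in> borel_measurable borel" for s x
    unfolding pK_def e_def by measurable
  have E1: "integrable N (pK s x)" "(\<lambda>n. exp (- l n * s) * e n x * a n) sums (\<integral>y. pK s x y \<partial>N)"
    if "0 < s" "x \<in> \<Omega>" for s x
  proof -
    have Fs: "(\<lambda>n. (exp (- l n * s) * e n x) * e n y) sums pK s x y" if "y \<in> space N" for y
      using Ks[of s x y] that \<open>0 < s\<close> \<open>x \<in> \<Omega>\<close> spN by simp
    note E = expand[OF dsum[OF that] Fs om o2]
    show "integrable N (pK s x)" using E(3) by simp
    show "(\<lambda>n. exp (- l n * s) * e n x * a n) sums (\<integral>y. pK s x y \<partial>N)"
      using E(4) unfolding a_def by simp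
  qed
  have surv: "survival_prob M Y \<Omega> x s = (\<integral>y. pK s x y \<partial>N)" if "0 < s" "x \<in> \<Omega>" for s x
  proof -
    have "survival_prob M Y \<Omega> x s = measure M {\<omega>\<in>space M. ereal s < exit_time \<Omega> (\<lambda>t. x + Y t \<omega>) \<and> x + Y s \<omega> \<in> \<Omega>}"
      unfolding survival_prob_def
      by (rule arg_cong[where f="measure M"]) (use exit_le[OF that(1), of "\<lambda>t. x + Y t _" \<Omega>] in blast)
    also have "\<dots> = (LINT y:\<Omega>|lborel. pK s x y)"
      unfolding dens[OF that \<Omega>B order_refl] pK_def l_def e_def ..
    finally show ?thesis by (simp add: integN)
  qed
  have Kpos: "AE y in N. 0 \<le> pK s x y" if "0 < s" "x \<in> \<Omega>" for s x
  proof -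
    define A where "A = {y \<in> \<Omega>. pK s x y < 0}"
    have AB[measurable]: "A \<in> sets borel" unfolding A_def by measurable
    have AO: "A \<subseteq> \<Omega>" unfolding A_def by auto
    have intO: "set_integrable lborel \<Omega> (pK s x)" using E1(1)[OF that] by (simp add: intN)
    have intA: "set_integrable lborel A (pK s x)" by (rule set_integrable_subset[OF intO _ AO]) simp
    have "0 \<le> measure M {\<omega>\<in>space M. ereal s < exit_time \<Omega> (\<lambda>t. x + Y t \<omega>) \<and> x + Y s \<omega> \<in> A}" by simp
    also have "\<dots> = (LINT y:A|lborel. pK s x y)"
      unfolding dens[OF that AB AO] pK_def l_def e_def ..
    finally have ge: "0 \<le> (LINT y:A|lborel. pK s x y)" .
    define f where "f y = indicator A y * (- pK s x y)" for y
    have fi: "integrable lborel f"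
      using intA unfolding set_integrable_def f_def by simp
    have fnn: "0 \<le> f y" for y by (auto simp: f_def indicator_def A_def)
    have "integral\<^sup>L lborel f = - (LINT y:A|lborel. pK s x y)"
      unfolding f_def set_lebesgue_integral_def by simp
    moreover have "0 \<le> integral\<^sup>L lborel f" by (rule Bochner_Integration.integral_nonneg) (rule fnn)
    ultimately have "integral\<^sup>L lborel f = 0" using ge by linarith
    then have "AE y in lborel. f y = 0" using integral_nonneg_eq_0_iff_AE[OF fi] fnn by simp
    then have "AE y in lborel. y \<in> \<Omega> \<longrightarrow> 0 \<le> pK s x y"
      by eventually_elim (auto simp: f_def A_def indicator_def split: if_splits)
    then show ?thesis unfolding N_def by (subst AE_restrict_space_iff[OF \<Omega>L])
  qed
  have a0: "a 0 \<noteq> 0"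
  proof -
    have "(\<integral>x. e 0 x \<partial>N) \<noteq> 0"
    proof (rule ground[where s=1 and K="pK 1" and l=l])
      show "(0::real) < 1" by simp
      show "0 < l 0" "l 0 < l 1" by (fact l0, fact l01)
      show "l 1 \<le> l n" if "1 \<le> n" for n using lge that by simp
      show "AE y in N. 0 \<le> pK 1 x y" if "x \<in> space N" for x using Kpos[of 1 x] that spN by simp
      show "summable (\<lambda>n. (exp (- l n * 1) * e n x)\<^sup>2)" if "x \<in> space N" for x
        using dsum[of 1 x] that spN by simp
      show "(\<lambda>n. exp (- l n * 1) * e n x * e n y) sums pK 1 x y" if "x \<in> space N" "y \<in> space N" for x y
        using Ks[of 1 x y] that spN by simp
    qed
    then show ?thesis unfolding a_def by simp
  qed
  have ds2: "summable (\<lambda>n. (exp (- l n * s) * a n)\<^sup>2)" if "0 < s" for s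
  proof (rule summable_comparison_test[OF _ asum])
    have "(exp (- l n * s))\<^sup>2 \<le> 1" for n
    proof -
      have "exp (- l n * s) \<le> 1" using lpos[of n] that by simp
      moreover have "0 \<le> exp (- l n * s)" by simp
      ultimately show ?thesis by (simp add: power_le_one)
    qed
    then show "\<exists>N. \<forall>n\<ge>N. norm ((exp (- l n * s) * a n)\<^sup>2) \<le> (a n)\<^sup>2"
      by (auto simp: power_mult_distrib intro!: mult_left_le_one_le)
  qed
  have Qsum: "(\<lambda>n. exp (- l n * s) * (a n)\<^sup>2) sums spectral_heat_content M Y \<Omega> s" if s: "0 < s" for s
  proof -
    have Fs: "(\<lambda>n. (exp (- l n * s) * a n) * e n x) sums survival_prob M Y \<Omega> x s" if "x \<in> space N" for x
      using E1(2)[OF s, of x] surv[OF s, of x] that spN by (simp add: ac_simps)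
    note E = expand[OF ds2[OF s] Fs om o2]
    have "spectral_heat_content M Y \<Omega> s = (\<integral>x. survival_prob M Y \<Omega> x s * 1 \<partial>N)"
      unfolding spectral_heat_content_def by (simp add: integN)
    then show ?thesis using E(4) unfolding a_def by (simp add: power2_eq_square ac_simps)
  qed
  have surv0: "survival_prob M Y \<Omega> x 0 = 1" if "x \<in> \<Omega>" for x
  proof -
    have lev: "levy_process M Y" using assms(3) unfolding isotropic_stable_def by simp
    then have ps: "prob_space M" unfolding levy_process_def by simp
    have "{\<omega>\<in>space M. ereal 0 < exit_time \<Omega> (\<lambda>s. x + Y s \<omega>)} = space M"
    proof (intro set_eqI iffI)
      fix \<omega> assume "\<omega> \<in> space M"
      moreover have "cadlag_path (\<lambda>s. Y s \<omega>)" "Y 0 \<omega> = 0"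
        using lev \<open>\<omega> \<in> space M\<close> unfolding levy_process_def by auto
      ultimately show "\<omega> \<in> {\<omega>\<in>space M. ereal 0 < exit_time \<Omega> (\<lambda>s. x + Y s \<omega>)}"
        using exit_pos[of Y \<omega> \<Omega> x] assms(4) that by auto
    qed auto
    then show ?thesis unfolding survival_prob_def using prob_space.prob_space[OF ps] by simp
  qed
  have Q0: "spectral_heat_content M Y \<Omega> 0 = C"
  proof -
    have "spectral_heat_content M Y \<Omega> 0 = (LINT x:\<Omega>|lborel. (1::real))"
      unfolding spectral_heat_content_def by (rule set_lebesgue_integral_cong) (auto simp: surv0)
    also have "\<dots> = C" unfolding C_def using finO by (subst set_integral_const) auto
    finally show ?thesis .
  qed
  define hQ where "hQ s = (if 0 < s then (\<Sum>n. exp (- l n * s) * (a n)\<^sup>2) else C)" for s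
  have hQ_eq: "spectral_heat_content M Y \<Omega> s = hQ s" if "0 \<le> s" for s
  proof (cases "0 < s")
    case True then show ?thesis unfolding hQ_def using sums_unique[OF Qsum[OF True]] by simp
  next
    case False then have "s = 0" using that by simp
    then show ?thesis using Q0 by (simp add: hQ_def)
  qed
  have hQm[measurable]: "hQ \<in> borel_measurable borel" unfolding hQ_def by measurable
  have hQb: "(a 0)\<^sup>2 * exp (- l 0 * s) \<le> hQ s \<and> hQ s \<le> C * exp (- l 0 * s)" if "0 \<le> s" for s
  proof (cases "0 < s")
    case True
    note qs = Qsum[OF True]
    have sm: "summable (\<lambda>n. exp (- l n * s) * (a n)\<^sup>2)" using qs by (rule sums_summable)
    have low: "(a 0)\<^sup>2 * exp (- l 0 * s) \<le> (\<Sum>n. exp (- l n * s) * (a n)\<^sup>2)"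
      using sum_le_suminf[OF sm, of "{0}"] by (simp add: mult.commute)
    have "(\<Sum>n. exp (- l n * s) * (a n)\<^sup>2) \<le> (\<Sum>n. exp (- l 0 * s) * (a n)\<^sup>2)"
    proof (rule suminf_le)
      show "exp (- l n * s) * (a n)\<^sup>2 \<le> exp (- l 0 * s) * (a n)\<^sup>2" for n
        using lmin[of n] True by (intro mult_right_mono) auto
      show "summable (\<lambda>n. exp (- l 0 * s) * (a n)\<^sup>2)" by (intro summable_mult asum)
    qed (rule sm)
    also have "\<dots> = exp (- l 0 * s) * (\<Sum>n. (a n)\<^sup>2)" by (rule suminf_mult[OF asum])
    also have "\<dots> \<le> exp (- l 0 * s) * C" using aC by (intro mult_left_mono) auto
    finally show ?thesis using low True by (simp add: hQ_def mult.commute)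
  next
    case False then have "s = 0" using that by simp
    then show ?thesis using a0C by (simp add: hQ_def)
  qed
  have c0: "0 < (a 0)\<^sup>2" using a0 by simp
  note sub = assms(7)[unfolded subordinator_def]
  have levD: "levy_process M D" and nu: "infinite_levy_measure \<nu>" using sub by blast+
  have monoD: "mono_on {0..} (\<lambda>t. D t \<omega>)" if "\<omega> \<in> space M" for \<omega> using sub that by blast
  have lap: "(\<integral>\<omega>. exp (- lam 1 * D t \<omega>) \<partial>M) = exp (- t * laplace_exponent \<nu> (lam 1))" if "0 \<le> t" for t
    using sub that lam1 by simp
  have psM: "prob_space M" using levD unfolding levy_process_def by simp
  interpret P: prob_space M by (rule psM)
  have Dm[measurable]: "D t \<in> borel_measurable M" for t using levD unfolding levy_process_def by simp
  have D0: "D 0 \<omega> = 0" if "\<omega> \<in> space M" for \<omega> using levD that unfolding levy_process_def by simp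
  have Dnn: "0 \<le> D t \<omega>" if "0 \<le> t" "\<omega> \<in> space M" for t \<omega>
    using mono_onD[OF monoD[OF that(2)], of 0 t] that D0[OF that(2)] by simp
  have phi: "0 < laplace_exponent \<nu> (lam 1)" by (rule phi_pos[OF nu lam1])
  show ?thesis
  proof (rule asym[OF phi c0])
    fix t :: real assume t: "0 \<le> t"
    have SH: "subordinate_heat_content M Y D \<Omega> t = (\<integral>\<omega>. hQ (D t \<omega>) \<partial>M)"
      unfolding subordinate_heat_content_def
      by (rule Bochner_Integration.integral_cong) (auto simp: hQ_eq Dnn t)
    have bndw: "(a 0)\<^sup>2 * exp (- lam 1 * D t \<omega>) \<le> hQ (D t \<omega>) \<and> hQ (D t \<omega>) \<le> C * exp (- lam 1 * D t \<omega>)"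
      if "\<omega> \<in> space M" for \<omega> using hQb[OF Dnn[OF t that]] l0eq by simp
    have ebnd: "exp (- lam 1 * D t \<omega>) \<le> 1" if "\<omega> \<in> space M" for \<omega>
      using Dnn[OF t that] lam1 by simp
    have Cnn: "0 \<le> C" unfolding C_def by simp
    have int1: "integrable M (\<lambda>\<omega>. hQ (D t \<omega>))"
    proof (rule P.integrable_const_bound[where B=C])
      show "AE \<omega> in M. norm (hQ (D t \<omega>)) \<le> C"
      proof (rule AE_I2)
        fix \<omega> assume w: "\<omega> \<in> space M"
        have z: "0 \<le> (a 0)\<^sup>2 * exp (- lam 1 * D t \<omega>)" by simp
        have c1: "C * exp (- lam 1 * D t \<omega>) \<le> C * 1" using ebnd[OF w] Cnn by (intro mult_left_mono)
        have "0 \<le> hQ (D t \<omega>)" "hQ (D t \<omega>) \<le> C" using bndw[OF w] z c1 by linarith+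
        then show "norm (hQ (D t \<omega>)) \<le> C" by simp
      qed
    qed measurable
    have int2: "integrable M (\<lambda>\<omega>. exp (- lam 1 * D t \<omega>))"
    proof (rule P.integrable_const_bound[where B=1])
      show "AE \<omega> in M. norm (exp (- lam 1 * D t \<omega>)) \<le> 1" using ebnd by (intro AE_I2) simp
    qed measurable
    have "(a 0)\<^sup>2 * exp (- t * laplace_exponent \<nu> (lam 1)) = (\<integral>\<omega>. (a 0)\<^sup>2 * exp (- lam 1 * D t \<omega>) \<partial>M)"
      using lap[OF t] by simp
    also have "\<dots> \<le> (\<integral>\<omega>. hQ (D t \<omega>) \<partial>M)"
      using int1 int2 bndw by (intro Bochner_Integration.integral_mono) auto
    finally have lo: "(a 0)\<^sup>2 * exp (- t * laplace_exponent \<nu> (lam 1)) \<le> subordinate_heat_content M Y D \<Omega> t"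
      using SH by simp
    have "(\<integral>\<omega>. hQ (D t \<omega>) \<partial>M) \<le> (\<integral>\<omega>. C * exp (- lam 1 * D t \<omega>) \<partial>M)"
      using int1 int2 bndw by (intro Bochner_Integration.integral_mono) auto
    also have "\<dots> = C * exp (- t * laplace_exponent \<nu> (lam 1))" using lap[OF t] by simp
    finally have up: "subordinate_heat_content M Y D \<Omega> t \<le> C * exp (- t * laplace_exponent \<nu> (lam 1))"
      using SH by simp
    show "(a 0)\<^sup>2 * exp (- t * laplace_exponent \<nu> (lam 1)) \<le> subordinate_heat_content M Y D \<Omega> t \<and>
        subordinate_heat_content M Y D \<Omega> t \<le> C * exp (- t * laplace_exponent \<nu> (lam 1))"
      using lo up by simp
  qed
qed

end
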